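(* Let $K=\mathbb{Q}(\sqrt m)$ be a Deng–Li field and write its fundamental unit as $\varepsilon=a+b\sqrt m$ with $a,b\in\mathbb{Z}$. Then $b$ is odd.
   Context: A Deng–Li field is $K=\mathbb{Q}(\sqrt m)$, $m=\ell_1\ell_2\cdots\ell_n$ with $n\ge 2$ even and $\ell_1,\dots,\ell_n$ distinct primes such that: - $\ell_1\equiv3\pmod8$; - $\ell_i\equiv5\pmod8$ for $i\ge2$; - $\big(\frac{\ell_1}{\ell_2}\big)=-1$, and $\big(\frac{\ell_1}{\ell_j}\big)=1$ for $j\ge3$; - $\big(\frac{\ell_i}{\ell_j}\big)=-1$ for $2\le i<j\le n$ (Legendre symbols). Here $m\equiv7\pmod 8$, the ring of integers is $\mathbb{Z}[\sqrt m]$, and the fundamental unit has norm $1$. *)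

theory Defs
  imports Complex_Main "HOL-Number_Theory.Number_Theory"
begin

text \<open>Deng--Li field data: m = l_0 * ... * l_(n-1) (0-based indexing of the primes).\<close>
definition deng_li :: "int list \<Rightarrow> bool" where
  "deng_li ls \<longleftrightarrow>
     (let n = length ls in
      n \<ge> 2 \<and> even n \<and> distinct ls \<and> (\<forall>p\<in>set ls. prime p) \<and>
      ls ! 0 mod 8 = 3 \<and>
      (\<forall>i. 1 \<le> i \<and> i < n \<longrightarrow> ls ! i mod 8 = 5) \<and>
      Legendre (ls ! 0) (ls ! 1) = -1 \<and>
      (\<forall>j. 2 \<le> j \<and> j < n \<longrightarrow> Legendre (ls ! 0) (ls ! j) = 1) \<and>
      (\<forall>i j. 1 \<le> i \<and> i < j \<and> j < n \<longrightarrow> Legendre (ls ! i) (ls ! j) = -1))"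

text \<open>Units of Z[sqrt m] (the ring of integers here): a + b sqrt m with norm +-1.\<close>
definition is_unit_Zsqrt :: "int \<Rightarrow> int \<Rightarrow> int \<Rightarrow> bool" where
  "is_unit_Zsqrt m a b \<longleftrightarrow> a^2 - m * b^2 = 1 \<or> a^2 - m * b^2 = -1"

definition fundamental_unit :: "int \<Rightarrow> int \<Rightarrow> int \<Rightarrow> bool" where
  "fundamental_unit m a b \<longleftrightarrow>
     is_unit_Zsqrt m a b \<and> a + b * sqrt (real_of_int m) > 1 \<and>
     (\<forall>c d. is_unit_Zsqrt m c d \<and> c + d * sqrt (real_of_int m) > 1 \<longrightarrow>
        a + b * sqrt (real_of_int m) \<le> c + d * sqrt (real_of_int m))"

end

theory Submission
  imports Defs "HOL-Computational_Algebra.Nth_Powers"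
begin


lemma small_eq_mod:
  fixes x y p :: int
  assumes "p > 2" "[x = y] (mod p)" "x \<in> {-1,0,1}" "y \<in> {-1,0,1}"
  shows "x = y"
proof -
  have "p dvd (x - y)" using assms(2) by (simp add: cong_iff_dvd_diff)
  moreover have "\<bar>x - y\<bar> < p" using assms by auto
  ultimately show ?thesis
    using dvd_imp_le_int[of "x - y" p] by (cases "x - y = 0") auto
qed

lemma Legendre_vals: "Legendre a p \<in> {-1,0,1}"
  by (auto simp: Legendre_def)

lemma euler_int:
  fixes p :: int assumes "prime p" "p > 2"
  shows "[Legendre a p = a ^ (nat ((p - 1) div 2))] (mod p)"
proof -
  have pn: "prime (nat p)" using assms(1) prime_int_nat_transfer by blast
  have "2 < nat p" using assms by simp
  from euler_criterion[OF pn this, of a] have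
    "[Legendre a (int (nat p)) = a ^ ((nat p - 1) div 2)] (mod int (nat p))" .
  moreover have "(nat p - 1) div 2 = nat ((p - 1) div 2)" using assms by (simp add: nat_div_distrib)
  ultimately show ?thesis using assms by simp
qed

lemma Legendre_mult:
  fixes p :: int assumes "prime p" "p > 2"
  shows "Legendre (a*b) p = Legendre a p * Legendre b p"
proof -
  let ?k = "nat ((p - 1) div 2)"
  have "[Legendre (a*b) p = (a*b) ^ ?k] (mod p)" using euler_int[OF assms] .
  moreover have "[Legendre a p * Legendre b p = a ^ ?k * b ^ ?k] (mod p)"
    using euler_int[OF assms] cong_mult by blast
  ultimately have "[Legendre (a*b) p = Legendre a p * Legendre b p] (mod p)"
    by (metis cong_sym cong_trans power_mult_distrib)
  moreover have "Legendre a p * Legendre b p \<in> {-1,0,1}"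
    using Legendre_vals[of a p] Legendre_vals[of b p] by auto
  ultimately show ?thesis using small_eq_mod[OF assms(2)] Legendre_vals by blast
qed

lemma Legendre_one: "(p::int) > 1 \<Longrightarrow> Legendre 1 p = 1"
  unfolding Legendre_def QuadRes_def
  by (auto simp: cong_def intro: exI[of _ 1])

lemma Legendre_prod:
  fixes p :: int assumes "prime p" "p > 2" "finite A"
  shows "Legendre (\<Prod>j\<in>A. f j) p = (\<Prod>j\<in>A. Legendre (f j) p)"
  using assms(3) by induction (use assms Legendre_one Legendre_mult in auto)

lemma Legendre_cong:
  assumes "[a = b] (mod p)" shows "Legendre a p = Legendre b p"
proof -
  have "[a = 0] (mod p) \<longleftrightarrow> [b = 0] (mod p)"
    using assms cong_sym cong_trans by blast
  moreover have "QuadRes p a \<longleftrightarrow> QuadRes p b"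
    unfolding QuadRes_def using assms cong_sym cong_trans by blast
  ultimately show ?thesis unfolding Legendre_def by simp
qed

lemma Legendre_sq:
  fixes p :: int assumes "prime p" "\<not> p dvd y"
  shows "Legendre (y^2) p = 1"
proof -
  have "\<not> [y^2 = 0] (mod p)"
    using assms by (simp add: cong_0_iff prime_dvd_power_iff)
  moreover have "QuadRes p (y^2)" unfolding QuadRes_def by (blast intro: cong_refl)
  ultimately show ?thesis unfolding Legendre_def by simp
qed

lemma Legendre_nonzero:
  fixes p :: int assumes "\<not> p dvd a"
  shows "Legendre a p = 1 \<or> Legendre a p = -1"
  using assms by (auto simp: Legendre_def cong_0_iff)

lemma Legendre_minus1:
  fixes p :: int assumes "prime p" "p > 2"
  shows "Legendre (-1) p = (if p mod 4 = 1 then 1 else -1)"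
proof -
  have c: "[Legendre (-1) p = (-1) ^ (nat ((p - 1) div 2))] (mod p)" using euler_int[OF assms] .
  have "odd p" using assms by (metis prime_odd_int)
  then have "p mod 4 = 1 \<or> p mod 4 = 3" by presburger
  then show ?thesis
  proof
    assume h: "p mod 4 = 1"
    then have "even ((p - 1) div 2)" by presburger
    then have "even (nat ((p - 1) div 2))" using assms by (simp add: even_nat_iff)
    then have "[Legendre (-1) p = 1] (mod p)" using c by simp
    then show ?thesis using h small_eq_mod[OF assms(2)] Legendre_vals by auto
  next
    assume h: "p mod 4 = 3"
    then have "odd ((p - 1) div 2)" by presburger
    then have "odd (nat ((p - 1) div 2))" using assms by (simp add: even_nat_iff)
    then have "[Legendre (-1) p = -1] (mod p)" using c by simp
    then show ?thesis using h small_eq_mod[OF assms(2)] Legendre_vals by auto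
  qed
qed

lemma Legendre_sym:
  fixes p q :: int assumes "prime p" "prime q" "p > 2" "q > 2" "p \<noteq> q" "q mod 4 = 1"
  shows "Legendre p q = Legendre q p"
proof -
  have "Legendre p q * Legendre q p = (-1::int) ^ (nat ((p - 1) div 2 * ((q - 1) div 2)))"
    using Quadratic_Reciprocity_int assms prime_int_nat_transfer by blast
  moreover have "even ((p - 1) div 2 * ((q - 1) div 2))" using assms(6) by presburger
  ultimately have "Legendre p q * Legendre q p = 1"
    using assms by (simp add: even_nat_iff)
  moreover have "\<not> q dvd p" using assms
    by (metis primes_dvd_imp_eq)
  moreover have "\<not> p dvd q" using assms
    by (metis primes_dvd_imp_eq)
  ultimately show ?thesis using Legendre_nonzero[of q p] Legendre_nonzero[of p q] by auto
qed



lemma prodpm: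
  fixes f :: "nat \<Rightarrow> int"
  assumes "finite A" "\<forall>j\<in>A. f j = (if j \<in> B then 1 else -1)"
  shows "prod f A = (-1) ^ card (A - B)"
  using assms
proof (induction A rule: finite_induct)
  case empty then show ?case by simp
next
  case (insert x F)
  then have "prod f (insert x F) = f x * prod f F" by simp
  also have "\<dots> = f x * (-1) ^ card (F - B)" using insert by simp
  also have "\<dots> = (-1) ^ card (insert x F - B)"
  proof (cases "x \<in> B")
    case True
    then have "insert x F - B = F - B" by auto
    then show ?thesis using True insert by simp
  next
    case False
    then have "insert x F - B = insert x (F - B)" by auto
    moreover have "finite (F - B)" "x \<notin> F - B" using insert by auto
    ultimately show ?thesis using False insert by simp
  qed
  finally show ?case .
qed

lemma comb:
  fixes n :: nat and S T :: "nat set" and L :: "nat \<Rightarrow> nat \<Rightarrow> int" and M :: "nat \<Rightarrow> int"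
  assumes ev: "even n" and n2: "n \<ge> 2" and un: "S \<union> T = {0..<n}" and dj: "S \<inter> T = {}"
   and L01: "L 0 1 = -1" and L10: "L 1 0 = -1"
   and L0j: "\<And>j. 2 \<le> j \<Longrightarrow> j < n \<Longrightarrow> L 0 j = 1"
   and Lj0: "\<And>j. 2 \<le> j \<Longrightarrow> j < n \<Longrightarrow> L j 0 = 1"
   and Lij: "\<And>i j. 1 \<le> i \<Longrightarrow> 1 \<le> j \<Longrightarrow> i \<noteq> j \<Longrightarrow> i < n \<Longrightarrow> j < n \<Longrightarrow> L i j = -1"
   and M0: "M 0 = -1" and Mi: "\<And>i. 1 \<le> i \<Longrightarrow> M i = 1"
   and CS: "\<And>i. i \<in> S \<Longrightarrow> (\<Prod>j\<in>T. L j i) = 1"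
   and CT: "\<And>i. i \<in> T \<Longrightarrow> M i * (\<Prod>j\<in>S. L j i) = 1"
  shows "T = {}"
proof (rule ccontr)
  assume Tne: "T \<noteq> {}"
  have fS: "finite S" and fT: "finite T" using un by (metis finite_Un finite_atLeastLessThan)+
  have Sn: "S \<subseteq> {0..<n}" and Tn: "T \<subseteq> {0..<n}" using un by auto
  have cn: "card S + card T = n" using un dj fS fT
    by (metis card_Un_disjoint card_atLeastLessThan diff_zero)
  have p1: "\<And>k. (-1::int) ^ k = 1 \<longleftrightarrow> even k" by (simp add: minus_one_power_iff)
  show False
  proof (cases "0 \<in> T")
    case True
    have "1 \<in> S"
    proof (rule ccontr)
      assume "1 \<notin> S"
      have "\<forall>j\<in>S. L j 0 = (if j \<in> S then 1 else -1)"
      proof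
        fix j assume "j \<in> S"
        then have "j \<noteq> 0" "j \<noteq> 1" "j < n" using \<open>1 \<notin> S\<close> True dj Sn by auto
        then have "2 \<le> j" "j < n" by auto
        then show "L j 0 = (if j \<in> S then 1 else -1)" using Lj0 \<open>j \<in> S\<close> by simp
      qed
      then have "(\<Prod>j\<in>S. L j 0) = (-1) ^ card (S - S)" by (rule prodpm[OF fS])
      then have "(\<Prod>j\<in>S. L j 0) = 1" by simp
      then show False using CT[OF True] M0 by simp
    qed
    have "\<forall>j\<in>T. L j 1 = (if j \<in> {} then 1 else -1)"
    proof
      fix j assume "j \<in> T"
      then have "j \<noteq> 1" "j < n" using \<open>1 \<in> S\<close> dj Tn by auto
      then show "L j 1 = (if j \<in> {} then 1 else -1)" using L01 Lij[of j 1] n2 by (cases "j = 0") auto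
    qed
    then have "(\<Prod>j\<in>T. L j 1) = (-1) ^ card (T - {})" by (rule prodpm[OF fT])
    then have evT: "even (card T)" using CS[OF \<open>1 \<in> S\<close>] p1 by simp
    have "S = {1}"
    proof (rule ccontr)
      assume "S \<noteq> {1}"
      then obtain k where k: "k \<in> S" "k \<noteq> 1" using \<open>1 \<in> S\<close> by blast
      then have "k \<noteq> 0" "k < n" using True dj Sn by auto
      then have k2: "2 \<le> k" "k < n" using k by auto
      have "\<forall>j\<in>T. L j k = (if j \<in> {0} then 1 else -1)"
      proof
        fix j assume "j \<in> T"
        then have "j \<noteq> k" "j < n" using k dj Tn by auto
        then show "L j k = (if j \<in> {0} then 1 else -1)" using L0j[OF k2] Lij[of j k] k2 by (cases "j = 0") auto
      qed
      then have "(\<Prod>j\<in>T. L j k) = (-1) ^ card (T - {0})" by (rule prodpm[OF fT])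
      then have "even (card (T - {0}))" using CS[OF k(1)] p1 by simp
      moreover have "card (T - {0}) = card T - 1" using True fT by simp
      moreover have "card T \<ge> 1" using True fT by (metis card_0_eq empty_iff less_one not_le)
      ultimately show False using evT by presburger
    qed
    then have "Suc (card T) = n" using cn by simp
    then show False using ev evT by presburger
  next
    case False
    then have "0 \<in> S" using un n2 by auto
    have "1 \<notin> T"
    proof
      assume "1 \<in> T"
      have "\<forall>j\<in>T. L j 0 = (if j \<in> T - {1} then 1 else -1)"
      proof
        fix j assume "j \<in> T"
        then have "j \<noteq> 0" "j < n" using False Tn by (metis, auto)
        then show "L j 0 = (if j \<in> T - {1} then 1 else -1)" using Lj0 L10 \<open>j \<in> T\<close>
          by (cases "j = 1") auto
      qed
      then have "(\<Prod>j\<in>T. L j 0) = (-1) ^ card (T - (T - {1}))" by (rule prodpm[OF fT])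
      moreover have "T - (T - {1}) = {1}" using \<open>1 \<in> T\<close> by auto
      ultimately show False using CS[OF \<open>0 \<in> S\<close>] by simp
    qed
    then have "1 \<in> S" using un n2 by auto
    have "\<forall>j\<in>T. L j 1 = (if j \<in> {} then 1 else -1)"
    proof
      fix j assume "j \<in> T"
      then have "j \<noteq> 1" "j \<noteq> 0" "j < n" using \<open>1 \<notin> T\<close> False Tn by (metis, metis, auto)
      then show "L j 1 = (if j \<in> {} then 1 else -1)" using Lij[of j 1] n2 by auto
    qed
    then have "(\<Prod>j\<in>T. L j 1) = (-1) ^ card (T - {})" by (rule prodpm[OF fT])
    then have evT: "even (card T)" using CS[OF \<open>1 \<in> S\<close>] p1 by simp
    obtain k where k: "k \<in> T" using Tne by blast
    then have "k \<noteq> 0" "k \<noteq> 1" "k < n" using False \<open>1 \<notin> T\<close> Tn by (metis, metis, auto)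
    then have k2: "2 \<le> k" "k < n" by auto
    have "\<forall>j\<in>S. L j k = (if j \<in> {0} then 1 else -1)"
    proof
      fix j assume "j \<in> S"
      then have "j \<noteq> k" "j < n" using k dj Sn by auto
      then show "L j k = (if j \<in> {0} then 1 else -1)" using L0j[OF k2] Lij[of j k] k2 by (cases "j = 0") auto
    qed
    then have "(\<Prod>j\<in>S. L j k) = (-1) ^ card (S - {0})" by (rule prodpm[OF fS])
    then have "even (card (S - {0}))" using CT[OF k] Mi[of k] k2 p1 by simp
    moreover have "card (S - {0}) = card S - 1" using \<open>0 \<in> S\<close> fS by simp
    moreover have "card S \<ge> 1" using \<open>0 \<in> S\<close> fS by (metis card_0_eq empty_iff less_one not_le)
    ultimately show False using evT cn ev by presburger
  qed
qed



lemma prod_list_nth: "prod_list xs = (\<Prod>i\<in>{0..<length xs}. xs ! i)"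
proof (induction xs)
  case Nil then show ?case by simp
next
  case (Cons x xs)
  then show ?case by (simp add: prod.atLeast0_lessThan_Suc_shift o_def del: prod.op_ivl_Suc)
qed

lemma sq4: "(x::int)^2 mod 4 = 0 \<or> x^2 mod 4 = 1"
proof (cases "even x")
  case True
  then obtain k where "x = 2*k" by blast
  then show ?thesis by (simp add: power2_eq_square)
next
  case False
  then obtain k where "x = 2*k+1" using oddE by blast
  then have "x^2 = 4*(k*k+k) + 1" by (simp add: power2_eq_square algebra_simps)
  then obtain q where "x^2 = 4*q + 1" by blast
  then show ?thesis by presburger
qed

lemma sqint:
  fixes a b c :: int
  assumes "coprime a b" "a > 0" "b > 0" "a * b = c^2"
  shows "\<exists>x\<ge>0. a = x^2"
proof -
  have "nat a * nat b = (nat \<bar>c\<bar>)^2" using assms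
    by (metis abs_ge_zero nat_mult_distrib nat_power_eq power2_abs less_imp_le)
  moreover have "coprime (nat a) (nat b)" using assms
    by (metis coprime_int_iff int_nat_eq less_imp_le nat_0_le)
  ultimately have "is_nth_power 2 (nat a)"
    using is_nth_power_mult_coprime_natD(1)[of "nat a" "nat b" 2] assms by auto
  then obtain z where "nat a = z^2" by (auto elim: is_nth_powerE)
  then have "a = (int z)^2" using assms by (metis int_nat_eq less_imp_le of_nat_power)
  then show ?thesis by (intro exI[of _ "int z"]) simp
qed



theorem lemma5p3:
  fixes ls :: "int list" and a b :: int
  assumes "deng_li ls"
    and "fundamental_unit (prod_list ls) a b"
  shows "odd b"
proof -
  define n where "n = length ls"
  define p where "p = (\<lambda>i. ls ! i)"
  define m where "m = prod_list ls"
  have n2: "n \<ge> 2" and evn: "even n" and dist: "distinct ls" and prm: "\<forall>q\<in>set ls. prime q"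
    and p08: "p 0 mod 8 = 3" and pi8: "\<And>i. 1 \<le> i \<Longrightarrow> i < n \<Longrightarrow> p i mod 8 = 5"
    and L01: "Legendre (p 0) (p 1) = -1"
    and L0j: "\<And>j. 2 \<le> j \<Longrightarrow> j < n \<Longrightarrow> Legendre (p 0) (p j) = 1"
    and Lij: "\<And>i j. 1 \<le> i \<Longrightarrow> i < j \<Longrightarrow> j < n \<Longrightarrow> Legendre (p i) (p j) = -1"
    using assms(1) unfolding deng_li_def Let_def n_def p_def by auto
  have pp: "\<And>i. i < n \<Longrightarrow> prime (p i)" using prm unfolding p_def n_def by auto
  have p4: "\<And>i. i < n \<Longrightarrow> p i mod 4 = (if i = 0 then 3 else 1)"
  proof -
    fix i assume "i < n"
    show "p i mod 4 = (if i = 0 then 3 else 1)"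
    proof (cases "i = 0")
      case True then show ?thesis using p08 by presburger
    next
      case False then have "p i mod 8 = 5" using pi8 \<open>i < n\<close> by simp
      then show ?thesis using False by presburger
    qed
  qed
  have p2: "\<And>i. i < n \<Longrightarrow> p i > 2"
  proof -
    fix i assume i: "i < n"
    have "p i \<ge> 2" using pp[OF i] prime_ge_2_int by blast
    moreover have "p i \<noteq> 2" using p4[OF i] by (cases "i = 0") auto
    ultimately show "p i > 2" by simp
  qed
  have pinj: "\<And>i j. i < n \<Longrightarrow> j < n \<Longrightarrow> p i = p j \<Longrightarrow> i = j"
    using dist nth_eq_iff_index_eq unfolding p_def n_def by blast
  have mprod: "m = (\<Prod>i\<in>{0..<n}. p i)" unfolding m_def n_def p_def by (rule prod_list_nth)
  have mpos: "m > 0" unfolding mprod by (intro prod_pos) (auto dest!: p2)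
  have m4: "m mod 4 = 3"
  proof -
    have "{0..<n} = insert 0 {1..<n}" using n2 by auto
    then have "m = p 0 * (\<Prod>i\<in>{1..<n}. p i)" unfolding mprod by simp
    moreover have "[(\<Prod>i\<in>{1..<n}. p i) = (\<Prod>i\<in>{1..<n}. 1)] (mod 4)"
      by (rule cong_prod) (use p4 in \<open>auto simp: cong_def\<close>)
    ultimately have "[m = p 0 * 1] (mod 4)" by (metis cong_mult cong_refl prod.neutral_const)
    then show ?thesis using p4[of 0] n2 by (simp add: cong_def)
  qed
  define s where "s = sqrt (real_of_int m)"
  have s0: "s > 0" and ss: "s * s = real_of_int m" using mpos unfolding s_def by auto
  have fu: "fundamental_unit m a b" using assms(2) by (simp add: m_def)
  have unit: "a^2 - m*b^2 = 1 \<or> a^2 - m*b^2 = -1"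
    using fu unfolding fundamental_unit_def is_unit_Zsqrt_def by blast
  have E1: "a + b * s > 1" using fu unfolding fundamental_unit_def s_def by blast
  have minim: "\<And>c d. is_unit_Zsqrt m c d \<Longrightarrow> c + d * s > 1 \<Longrightarrow> a + b * s \<le> c + d * s"
    using fu unfolding fundamental_unit_def s_def by blast
  have norm1: "a^2 - m*b^2 = 1"
  proof (rule ccontr)
    assume "a^2 - m*b^2 \<noteq> 1"
    then have "a^2 + 1 = m*b^2" using unit by linarith
    then have e1: "(a^2 + 1) mod 4 = (m*b^2) mod 4" by (rule arg_cong[where f="\<lambda>x. x mod 4"])
    have e2: "(m*b^2) mod 4 = ((m mod 4)*(b^2 mod 4)) mod 4" by (rule mod_mult_eq[symmetric])
    have e3: "(a^2 + 1) mod 4 = ((a^2 mod 4) + 1) mod 4" by (rule mod_add_left_eq[symmetric])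
    have "((a^2 mod 4) + 1) mod 4 = (3 * (b^2 mod 4)) mod 4" using e1 e2 e3 m4 by metis
    moreover have "a^2 mod 4 = 0 \<or> a^2 mod 4 = 1" by (rule sq4)
    moreover have "b^2 mod 4 = 0 \<or> b^2 mod 4 = 1" by (rule sq4)
    ultimately show False by (elim disjE) simp_all
  qed
  have Rnorm: "(a - b*s) * (a + b*s) = 1"
  proof -
    have "(a - b*s) * (a + b*s) = a^2 - b^2 * (s*s)" by (simp add: algebra_simps power2_eq_square)
    also have "\<dots> = real_of_int (a^2 - m*b^2)" using ss by simp
    finally show ?thesis using norm1 by simp
  qed
  have apos: "a > 0" and bpos: "b > 0"
  proof -
    have "a - b*s = 1 / (a + b*s)" using Rnorm E1 by (simp add: field_simps)
    then have "0 < a - b*s" "a - b*s < 1" using E1 by auto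
    then have "real_of_int a > 0" "b * s > 0" using E1 by linarith+
    then show "a > 0" "b > 0" using s0 by (simp, simp add: zero_less_mult_iff)
  qed
  show ?thesis
  proof (rule ccontr)
    assume "\<not> odd b"
    then obtain c where bc: "b = 2*c" by blast
    have cpos: "c > 0" using bpos bc by simp
    have a2: "a^2 = 1 + 4*(m*c^2)" using norm1 bc by (simp add: power2_eq_square algebra_simps)
    then have "odd (a^2)" by simp
    then have "odd a" by simp
    then obtain u where au: "a = 2*u + 1" using oddE by blast
    define v where "v = u + 1"
    have uv: "u * v = m * c^2" using a2 au unfolding v_def by (simp add: power2_eq_square algebra_simps)
    have upos: "u > 0"
    proof -
      have "u \<ge> 0" using apos au by simp
      moreover have "u \<noteq> 0" using uv mpos cpos unfolding v_def by auto
      ultimately show ?thesis by simp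
    qed
    have vpos: "v > 0" using upos unfolding v_def by simp
    have cop: "coprime u v" unfolding v_def by simp
    define S where "S = {i\<in>{0..<n}. p i dvd u}"
    define T where "T = {i\<in>{0..<n}. p i dvd v}"
    have pdm: "\<And>i. i < n \<Longrightarrow> p i dvd m" unfolding mprod by (intro dvd_prodI) auto
    have notboth: "\<And>i. i < n \<Longrightarrow> p i dvd u \<Longrightarrow> p i dvd v \<Longrightarrow> False"
    proof -
      fix i assume i: "i < n" "p i dvd u" "p i dvd v"
      then have "p i dvd v - u" by (rule_tac dvd_diff) auto
      then have "p i dvd 1" unfolding v_def by simp
      then show False using pp[OF i(1)] by (simp add: prime_int_iff)
    qed
    have un: "S \<union> T = {0..<n}"
    proof
      show "S \<union> T \<subseteq> {0..<n}" unfolding S_def T_def by auto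
      show "{0..<n} \<subseteq> S \<union> T"
      proof
        fix i assume i: "i \<in> {0..<n}"
        have "m dvd u * v" using uv by simp
        moreover have "p i dvd m" using i by (intro pdm) simp
        ultimately have "p i dvd u * v" by (rule dvd_trans[rotated])
        then have "p i dvd u \<or> p i dvd v" using prime_dvd_mult_iff[OF pp] i by simp
        then show "i \<in> S \<union> T" using i unfolding S_def T_def by auto
      qed
    qed
    have dj: "S \<inter> T = {}" unfolding S_def T_def using notboth by auto
    have fS: "finite S" and fT: "finite T" unfolding S_def T_def by auto
    define d where "d = (\<Prod>i\<in>S. p i)"
    define e where "e = (\<Prod>i\<in>T. p i)"
    have de: "d * e = m" unfolding d_def e_def mprod
      using prod.union_disjoint[OF fS fT dj, of p] un by simp
    have dpos: "d > 0" unfolding d_def by (intro prod_pos) (auto simp: S_def dest!: p2)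
    have epos: "e > 0" unfolding e_def by (intro prod_pos) (auto simp: T_def dest!: p2)
    have copdv: "coprime d v" unfolding d_def
    proof (rule prod_coprime_left)
      fix i assume "i \<in> S"
      then show "coprime (p i) v" using notboth pp prime_imp_coprime unfolding S_def by auto
    qed
    have copeu: "coprime e u" unfolding e_def
    proof (rule prod_coprime_left)
      fix i assume "i \<in> T"
      then show "coprime (p i) u" using notboth pp prime_imp_coprime unfolding T_def by auto
    qed
    have muv: "m dvd u * v" using uv by simp
    have "d dvd u * v" using muv de by (metis dvd_triv_left dvd_trans)
    then have "d dvd u" using coprime_dvd_mult_left_iff[OF copdv] by simp
    then obtain u' where u': "u = d * u'" by blast
    have "e dvd u * v" using muv de by (metis dvd_triv_right dvd_trans)
    then have "e dvd v" using coprime_dvd_mult_right_iff[OF copeu] by simp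
    then obtain v' where v': "v = e * v'" by blast
    have u'v': "u' * v' = c^2"
    proof -
      have "m * (u' * v') = (d * u') * (e * v')" using de by (simp add: algebra_simps)
      also have "\<dots> = m * c^2" using uv u' v' by simp
      finally have "m * (u' * v') = m * c^2" .
      then show ?thesis using mpos by simp
    qed
    have u'pos: "u' > 0" using upos dpos u' by (simp add: zero_less_mult_iff)
    have v'pos: "v' > 0" using vpos epos v' by (simp add: zero_less_mult_iff)
    have cop': "coprime u' v'" using cop u' v' by simp
    obtain x where x: "x \<ge> 0" "u' = x^2" using sqint[OF cop' u'pos v'pos u'v'] by blast
    obtain y where y: "y \<ge> 0" "v' = y^2"
      using sqint[of v' u' c] cop' u'pos v'pos u'v' by (auto simp: ac_simps coprime_commute)
    define L where "L = (\<lambda>j i. Legendre (p j) (p i))"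
    define M where "M = (\<lambda>i::nat. if i = 0 then -1 else (1::int))"
    have Mi: "\<And>i. i < n \<Longrightarrow> Legendre (-1) (p i) = M i"
    proof -
      fix i assume i: "i < n"
      show "Legendre (-1) (p i) = M i"
        unfolding Legendre_minus1[OF pp[OF i] p2[OF i]] M_def using p4[OF i] by simp
    qed
    have CS: "\<And>i. i \<in> S \<Longrightarrow> (\<Prod>j\<in>T. L j i) = 1"
    proof -
      fix i assume iS: "i \<in> S"
      then have i: "i < n" "p i dvd u" unfolding S_def by auto
      have ny: "\<not> p i dvd y"
      proof
        assume "p i dvd y"
        then have "p i dvd v" unfolding v' y by (simp add: power2_eq_square)
        then show False using notboth i by blast
      qed
      have "[v = 1] (mod p i)" using i unfolding v_def by (simp add: cong_iff_dvd_diff)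
      then have "Legendre v (p i) = Legendre 1 (p i)" by (rule Legendre_cong)
      also have "\<dots> = 1" using p2[OF i(1)] by (intro Legendre_one) simp
      finally have "Legendre v (p i) = 1" .
      moreover have "Legendre v (p i) = Legendre e (p i) * Legendre (y^2) (p i)"
        unfolding v' y(2) by (rule Legendre_mult[OF pp[OF i(1)] p2[OF i(1)]])
      moreover have "Legendre (y^2) (p i) = 1" by (rule Legendre_sq[OF pp[OF i(1)] ny])
      moreover have "Legendre e (p i) = (\<Prod>j\<in>T. L j i)"
        unfolding e_def L_def by (rule Legendre_prod[OF pp[OF i(1)] p2[OF i(1)] fT])
      ultimately show "(\<Prod>j\<in>T. L j i) = 1" by simp
    qed
    have CT: "\<And>i. i \<in> T \<Longrightarrow> M i * (\<Prod>j\<in>S. L j i) = 1"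
    proof -
      fix i assume iT: "i \<in> T"
      then have i: "i < n" "p i dvd v" unfolding T_def by auto
      have nx: "\<not> p i dvd x"
      proof
        assume "p i dvd x"
        then have "p i dvd u" unfolding u' x by (simp add: power2_eq_square)
        then show False using notboth i by blast
      qed
      have "-u - 1 = - v" unfolding v_def by simp
      then have "p i dvd (-u - 1)" using i(2) by simp
      then have "[-u = 1] (mod p i)" by (simp add: cong_iff_dvd_diff)
      then have "Legendre (-u) (p i) = Legendre 1 (p i)" by (rule Legendre_cong)
      also have "\<dots> = 1" using p2[OF i(1)] by (intro Legendre_one) simp
      finally have "Legendre (-u) (p i) = 1" .
      moreover have negu: "-u = (-1) * (d * x^2)" using u' x by simp
      have "Legendre (-u) (p i) = Legendre (-1) (p i) * (Legendre d (p i) * Legendre (x^2) (p i))"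
        unfolding negu by (simp only: Legendre_mult[OF pp[OF i(1)] p2[OF i(1)]])
      moreover have "Legendre (x^2) (p i) = 1" by (rule Legendre_sq[OF pp[OF i(1)] nx])
      moreover have "Legendre d (p i) = (\<Prod>j\<in>S. L j i)"
        unfolding d_def L_def by (rule Legendre_prod[OF pp[OF i(1)] p2[OF i(1)] fS])
      ultimately show "M i * (\<Prod>j\<in>S. L j i) = 1" using Mi[OF i(1)] by simp
    qed
    have Tempty: "T = {}"
    proof (rule comb[OF evn n2 un dj, of L M])
      show "L 0 1 = -1" unfolding L_def using L01 .
      have "Legendre (p 0) (p 1) = Legendre (p 1) (p 0)"
        by (rule Legendre_sym) (use pp[of 0] pp[of 1] p2[of 0] p2[of 1] p4[of 1] pinj[of 0 1] n2 in auto)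
      then show "L 1 0 = -1" unfolding L_def using L01 by simp
      show "\<And>j. 2 \<le> j \<Longrightarrow> j < n \<Longrightarrow> L 0 j = 1" unfolding L_def using L0j .
      show "\<And>j. 2 \<le> j \<Longrightarrow> j < n \<Longrightarrow> L j 0 = 1" unfolding L_def
      proof -
        fix j :: nat assume j: "2 \<le> j" "j < n"
        have "Legendre (p 0) (p j) = Legendre (p j) (p 0)"
          by (rule Legendre_sym) (use pp[of 0] pp[of j] p2[of 0] p2[of j] p4[of j] pinj[of 0 j] j in auto)
        then show "Legendre (p j) (p 0) = 1" using L0j j by simp
      qed
      show "\<And>i j. 1 \<le> i \<Longrightarrow> 1 \<le> j \<Longrightarrow> i \<noteq> j \<Longrightarrow> i < n \<Longrightarrow> j < n \<Longrightarrow> L i j = -1"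
        unfolding L_def
      proof -
        fix i j :: nat assume ij: "1 \<le> i" "1 \<le> j" "i \<noteq> j" "i < n" "j < n"
        show "Legendre (p i) (p j) = -1"
        proof (cases "i < j")
          case True then show ?thesis using Lij ij by blast
        next
          case False
          then have "j < i" using ij by simp
          have "Legendre (p j) (p i) = Legendre (p i) (p j)"
            by (rule Legendre_sym) (use pp[of i] pp[of j] p2[of i] p2[of j] p4[of i] pinj[of i j] ij in auto)
          then show ?thesis using Lij[of j i] ij \<open>j < i\<close> by simp
        qed
      qed
      show "M 0 = -1" unfolding M_def by simp
      show "\<And>i. 1 \<le> i \<Longrightarrow> M i = 1" unfolding M_def by simp
      show "\<And>i. i \<in> S \<Longrightarrow> (\<Prod>j\<in>T. L j i) = 1" by (rule CS)
      show "\<And>i. i \<in> T \<Longrightarrow> M i * (\<Prod>j\<in>S. L j i) = 1" by (rule CT)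
    qed
    have e1: "e = 1" unfolding e_def Tempty by simp
    then have dm: "d = m" using de by simp
    have vy: "v = y^2" using v' y e1 by simp
    have ux: "u = m * x^2" using u' x dm by simp
    have "(x*y)^2 = c^2" using u'v' x y by (simp add: power_mult_distrib)
    moreover have "x * y \<ge> 0" using x(1) y(1) by simp
    ultimately have xyc: "x * y = c" using cpos power2_eq_iff_nonneg[of "x*y" c] by simp
    have "x \<noteq> 0" "y \<noteq> 0" using xyc cpos by auto
    then have xpos: "x > 0" and ypos: "y > 0" using x(1) y(1) by auto
    have norm_eta: "y^2 - m * x^2 = 1" using vy ux unfolding v_def by simp
    have eta1: "y + x * s > 1"
    proof -
      have "real_of_int y \<ge> 1" using ypos by simp
      moreover have "x * s > 0" using xpos s0 by simp
      ultimately show ?thesis by linarith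
    qed
    have "is_unit_Zsqrt m y x" unfolding is_unit_Zsqrt_def using norm_eta by simp
    then have le: "a + b * s \<le> y + x * s" by (rule minim[OF _ eta1])
    have sq: "(y + x * s) * (y + x * s) = a + b * s"
    proof -
      have "(y + x * s) * (y + x * s) = real_of_int (y^2) + real_of_int x^2 * (s * s) + 2 * real_of_int (x*y) * s"
        by (simp add: algebra_simps power2_eq_square)
      also have "\<dots> = real_of_int (y^2 + m * x^2) + 2 * real_of_int c * s"
        using ss xyc by (simp add: algebra_simps)
      also have "y^2 + m * x^2 = a" using vy ux au unfolding v_def by simp
      also have "2 * real_of_int c = b" using bc by simp
      finally show ?thesis .
    qed
    have "(y + x * s) * 1 < (y + x * s) * (y + x * s)"
      by (rule mult_strict_left_mono) (use eta1 in auto)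
    then show False using le sq by simp
  qed
qed


end
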